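(* Let $f(t)=e^{-t}/(-\log(1-e^{-t}))$ for $t>0$. Then, as $x\to\infty$, $$\int_0^{x}\log\big(1+(x-t)f(t)\big)\,f(t)\,dt=x\log x-x+O(\log x).$$ *)

theory Defs
  imports "HOL-Analysis.Analysis" "HOL-Library.Landau_Symbols"
begin

definition f8 :: "real \<Rightarrow> real" where
  "f8 t = exp (- t) / (- ln (1 - exp (- t)))"

end

theory Submission
  imports Defs "HOL-Real_Asymp.Real_Asymp"
begin

lemma f8_zero: "f8 0 = 0" by (simp add: f8_def)

lemma f8_bounds:
  assumes "t > 0"
  shows "1 - exp (-t) \<le> f8 t" "f8 t \<le> 1" "0 < f8 t"
proof -
  define u where "u = exp (-t)"
  have u0: "0 < u" "u < 1" using assms by (auto simp: u_def)
  have l1: "ln (1 - u) \<le> - u" using ln_le_minus_one[of "1-u"] u0 by simp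
  have l2: "- ln (1 - u) \<le> u / (1 - u)"
  proof -
    have "ln (1/(1-u)) \<le> 1/(1-u) - 1" using ln_le_minus_one[of "1/(1-u)"] u0 by simp
    moreover have "ln (1/(1-u)) = - ln (1-u)" using u0 by (simp add: ln_div)
    moreover have "1/(1-u) - 1 = u/(1-u)" using u0 by (simp add: field_simps)
    ultimately show ?thesis by simp
  qed
  have f: "f8 t = u / (- ln (1-u))" by (simp add: f8_def u_def)
  have Lpos: "- ln (1-u) > 0" using l1 u0 by linarith
  show "0 < f8 t" unfolding f using Lpos u0 by (intro divide_pos_pos)
  show "f8 t \<le> 1" unfolding f by (subst pos_divide_le_eq[OF Lpos]) (use l1 in linarith)
  have "u / (u/(1-u)) \<le> u / (- ln (1-u))"
  proof -
    have p: "0 < u/(1-u) * (- ln (1-u))" using Lpos u0 by (intro mult_pos_pos) auto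
    show ?thesis by (rule divide_left_mono[OF l2]) (use u0 p in auto)
  qed
  moreover have "u / (u/(1-u)) = 1 - u" using u0 by simp
  ultimately have "1 - u \<le> u / (- ln (1-u))" by linarith
  then show "1 - exp (-t) \<le> f8 t" unfolding f u_def[symmetric] .
qed

lemma f8_cont: assumes "x > 0" shows "continuous_on {0..x} f8"
proof -
  have "continuous (at t within {0..x}) f8" if t: "t \<in> {0..x}" for t
  proof (cases "t = 0")
    case True
    have "(f8 \<longlongrightarrow> 0) (at_right 0)" unfolding f8_def by real_asymp
    then show ?thesis using True assms by (simp add: continuous_within at_within_Icc_at_right f8_zero)
  next
    case False
    then have tp: "t > 0" using t by auto
    have a: "1 - exp (-t) > 0" using tp by simp
    have b: "ln (1 - exp (-t)) \<noteq> 0" using tp a by simp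
    have "isCont f8 t" unfolding f8_def using a b
      by (intro continuous_intros) auto
    then show ?thesis using continuous_at_imp_continuous_within by blast
  qed
  then show ?thesis using continuous_on_eq_continuous_within by blast
qed
lemma f8_nonneg: "t \<ge> 0 \<Longrightarrow> 0 \<le> f8 t"
  using f8_bounds(3)[of t] f8_zero by (cases "t = 0") auto

lemma f8_le1: "t \<ge> 0 \<Longrightarrow> f8 t \<le> 1"
  using f8_bounds(2)[of t] f8_zero by (cases "t = 0") auto

lemma d_bounds1:
  assumes "0 \<le> t" "t \<le> x"
  shows "0 \<le> ln (1 + (x - t)) - ln (1 + (x - t) * f8 t) * f8 t"
        "ln (1 + (x - t)) - ln (1 + (x - t) * f8 t) * f8 t \<le> ln (1 + x)"
proof -
  have f0: "0 \<le> f8 t" "f8 t \<le> 1" using assms f8_nonneg f8_le1 by auto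
  have s: "0 \<le> x - t" using assms by simp
  have m: "(x-t) * f8 t \<le> x - t" using f0 s by (simp add: mult_left_le)
  have p: "0 \<le> (x-t) * f8 t" using s f0 by simp
  have l1: "ln (1 + (x - t) * f8 t) \<le> ln (1 + (x - t))"
    using m s f0 p by (subst ln_le_cancel_iff) auto
  have l0: "0 \<le> ln (1 + (x - t) * f8 t)" using s f0 by simp
  have "ln (1 + (x - t) * f8 t) * f8 t \<le> ln (1 + (x - t)) * 1"
    using l1 l0 f0 by (intro mult_mono) auto
  then show "0 \<le> ln (1 + (x - t)) - ln (1 + (x - t) * f8 t) * f8 t" by simp
  have "0 \<le> ln (1 + (x - t) * f8 t) * f8 t" using l0 f0 by simp
  moreover have "ln (1 + (x - t)) \<le> ln (1 + x)" using assms by simp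
  ultimately show "ln (1 + (x - t)) - ln (1 + (x - t) * f8 t) * f8 t \<le> ln (1 + x)" by simp
qed

lemma d_bound2:
  assumes "1 \<le> t" "t \<le> x"
  shows "ln (1 + (x - t)) - ln (1 + (x - t) * f8 t) * f8 t \<le> exp (-t) * (ln (1 + x) + 2)"
proof -
  define u where "u = exp (-t)"
  define g where "g = 1 - u"
  define s where "s = x - t"
  have s0: "0 \<le> s" using assms by (simp add: s_def)
  have u0: "0 < u" by (simp add: u_def)
  have e1: "exp (1::real) \<ge> 2" using exp_ge_add_one_self[of 1] by simp
  have "u \<le> exp (-1)" using assms by (simp add: u_def)
  also have "exp (-1) = 1 / exp (1::real)" by (simp add: exp_minus field_simps)
  also have "\<dots> \<le> 1/2" using e1 by (simp add: divide_simps)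
  finally have uh: "u \<le> 1/2" .
  have g0: "0 < g" "g \<le> 1" using uh u0 by (auto simp: g_def)
  have fg: "g \<le> f8 t" "f8 t \<le> 1" using f8_bounds[of t] assms by (auto simp: g_def u_def)
  have A: "ln (1 + s * g) * g \<le> ln (1 + s * f8 t) * f8 t"
  proof -
    have "ln (1 + s * g) \<le> ln (1 + s * f8 t)"
      using s0 g0 fg by (subst ln_le_cancel_iff) (auto intro: mult_left_mono add_pos_nonneg)
    moreover have "0 \<le> ln (1 + s * g)" using s0 g0 by simp
    ultimately show ?thesis using fg g0 by (intro mult_mono) auto
  qed
  have B: "ln (1 + s) - ln (1 + s * g) \<le> - ln g"
  proof -
    have sg: "0 \<le> s * g" using g0 s0 by simp
    have "g * (1 + s) \<le> 1 + s * g" using g0 s0 by (simp add: algebra_simps)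
    then have "ln (g * (1 + s)) \<le> ln (1 + s * g)"
    proof -
      have "0 < g * (1 + s)" using g0 s0 by simp
      moreover have "0 < 1 + s * g" using sg by linarith
      ultimately show ?thesis using \<open>g * (1 + s) \<le> 1 + s * g\<close> by simp
    qed
    moreover have "ln (g * (1 + s)) = ln g + ln (1 + s)" using g0 s0 by (simp add: ln_mult)
    ultimately show ?thesis by simp
  qed
  have C: "- ln g \<le> 2 * u"
  proof -
    have "ln (1/g) \<le> 1/g - 1" using ln_le_minus_one[of "1/g"] g0 by simp
    moreover have "ln (1/g) = - ln g" using g0 by (simp add: ln_div)
    moreover have "1/g - 1 = u / g" using g0 by (simp add: field_simps g_def)
    moreover have "u / g \<le> 2 * u" using g0 uh u0 by (simp add: divide_simps g_def)
    ultimately show ?thesis by simp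
  qed
  have D: "ln (1 + s) \<le> ln (1 + x)" using assms by (simp add: s_def)
  have E: "0 \<le> ln (1 + s) - ln (1 + s * g)"
    using s0 g0 by (subst diff_ge_0_iff_ge, subst ln_le_cancel_iff) (auto intro: mult_left_le add_pos_nonneg)
  have "ln (1 + s) - ln (1 + s * g) * g = u * ln (1 + s) + g * (ln (1 + s) - ln (1 + s * g))"
    by (simp add: g_def algebra_simps)
  also have "\<dots> \<le> u * ln (1 + x) + 1 * (2 * u)"
    using B C D E g0 u0 by (intro add_mono mult_mono mult_left_mono) auto
  finally show ?thesis using A by (simp add: s_def u_def algebra_simps)
qed

lemma J_int:
  fixes x :: real
  assumes "x \<ge> 0"
  shows "((\<lambda>t. ln (1 + (x - t))) has_integral ((1 + x) * ln (1 + x) - x)) {0..x}"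
proof -
  define G where "G t = - ((1 + x - t) * ln (1 + x - t) - (1 + x - t))" for t
  have "((\<lambda>t. ln (1 + (x - t))) has_integral (G x - G 0)) {0..x}"
  proof (rule fundamental_theorem_of_calculus[of 0 x G "\<lambda>t. ln (1 + (x - t))"])
    show "0 \<le> x" using assms .
    fix t assume t: "t \<in> {0..x}"
    have pos: "1 + x - t > 0" using t by simp
    have "(G has_real_derivative ln (1 + (x - t))) (at t)"
      unfolding G_def using pos
      apply (auto intro!: derivative_eq_intros simp: algebra_simps)
      by (simp add: divide_simps)
    then show "(G has_vector_derivative ln (1 + (x - t))) (at t within {0..x})"
      by (simp add: has_real_derivative_iff_has_vector_derivative has_vector_derivative_at_within)
  qed
  moreover have "G x - G 0 = (1 + x) * ln (1 + x) - x" by (simp add: G_def algebra_simps)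
  ultimately show ?thesis by simp
qed

lemma exp_int:
  fixes x :: real
  assumes "x \<ge> 1"
  shows "((\<lambda>t. exp (-t)) has_integral (exp (-1) - exp (-x))) {1..x}"
proof -
  have "((\<lambda>t. exp (-t)) has_integral ((\<lambda>t. - exp (-t)) x - (\<lambda>t. - exp (-t)) 1)) {1..x}"
  proof (rule fundamental_theorem_of_calculus[of 1 x "\<lambda>t. - exp (-t)" "\<lambda>t. exp (-t)"])
    show "1 \<le> x" using assms .
    fix t assume t: "t \<in> {1..x}"
    have "((\<lambda>t. - exp (-t)) has_real_derivative exp (-t)) (at t)"
      by (auto intro!: derivative_eq_intros)
    then show "((\<lambda>t. - exp (-t)) has_vector_derivative exp (-t)) (at t within {1..x})"
      by (simp add: has_real_derivative_iff_has_vector_derivative has_vector_derivative_at_within)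
  qed
  then show ?thesis by simp
qed
lemma main_bound:
  fixes x :: real
  assumes x: "x \<ge> exp 1"
  shows "\<bar>integral {0..x} (\<lambda>t. ln (1 + (x - t) * f8 t) * f8 t) - (x * ln x - x)\<bar> \<le> 6 * ln x"
proof -
  have x1: "x \<ge> 1" using x exp_ge_add_one_self[of 1] by simp
  have lnx: "ln x \<ge> 1" using x x1 by (simp add: ln_ge_iff)
  define L where "L = ln (1 + x)"
  define \<phi> where "\<phi> t = ln (1 + (x - t) * f8 t) * f8 t" for t
  define \<psi> where "\<psi> t = ln (1 + (x - t))" for t
  define d where "d t = \<psi> t - \<phi> t" for t
  have pos: "0 < 1 + (x - t) * f8 t" if "t \<in> {0..x}" for t
  proof -
    have "0 \<le> (x - t) * f8 t" using that f8_nonneg[of t] by simp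
    then show ?thesis by linarith
  qed
  have cphi: "continuous_on {0..x} \<phi>"
  proof -
    have pos': "\<forall>t\<in>{0..x}. 1 + (x - t) * f8 t \<noteq> 0" using pos by force
    show ?thesis unfolding \<phi>_def using f8_cont[of x] x1 pos'
      by (intro continuous_intros) auto
  qed
  have iphi: "\<phi> integrable_on {0..x}" using cphi integrable_continuous_interval by blast
  have J: "(\<psi> has_integral ((1 + x) * L - x)) {0..x}" unfolding \<psi>_def L_def using J_int x1 by simp
  have ipsi: "\<psi> integrable_on {0..x}" using J by blast
  have id: "d integrable_on {0..x}" unfolding d_def using ipsi iphi by (intro integrable_diff)
  have Deq: "integral {0..x} d = ((1 + x) * L - x) - integral {0..x} \<phi>"
    unfolding d_def using integral_diff[OF ipsi iphi] J by (simp add: integral_unique)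
  have D0: "0 \<le> integral {0..x} d"
    using id d_bounds1(1) by (intro integral_nonneg) (auto simp: d_def \<phi>_def \<psi>_def)
  have split: "integral {0..1} d + integral {1..x} d = integral {0..x} d"
    using Henstock_Kurzweil_Integration.integral_combine[of 0 1 x d] x1 id by simp
  have i1: "d integrable_on {0..1}" using integrable_on_subinterval[OF id] x1 by simp
  have i2: "d integrable_on {1..x}" using integrable_on_subinterval[OF id] x1 by simp
  have D1: "integral {0..1} d \<le> L"
  proof -
    have "integral {0..1} d \<le> integral {0..1::real} (\<lambda>_. L)"
      apply (rule Henstock_Kurzweil_Integration.integral_le[OF i1])
      subgoal by (rule integrable_const_ivl)
      subgoal using d_bounds1(2)[of _ x] x1 by (auto simp: d_def \<phi>_def \<psi>_def L_def)
      done
    then show ?thesis by simp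
  qed
  have L0: "0 \<le> L" using x1 by (simp add: L_def)
  have E: "((\<lambda>t. exp (-t) * (L + 2)) has_integral (exp (-1) - exp (-x)) * (L + 2)) {1..x}"
    using has_integral_mult_left[OF exp_int[OF x1]] by simp
  have D2: "integral {1..x} d \<le> L + 2"
  proof -
    have "integral {1..x} d \<le> integral {1..x} (\<lambda>t. exp (-t) * (L + 2))"
      by (rule Henstock_Kurzweil_Integration.integral_le[OF i2])
         (use d_bound2[of _ x] E in \<open>auto simp: d_def \<phi>_def \<psi>_def L_def\<close>)
    also have "\<dots> = (exp (-1) - exp (-x)) * (L + 2)" by (rule integral_unique[OF E])
    also have "\<dots> \<le> 1 * (L + 2)"
    proof (rule mult_right_mono)
      have "exp (-1::real) \<le> 1" by simp
      moreover have "0 < exp (-x)" by simp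
      ultimately show "exp (-1) - exp (-x) \<le> 1" by linarith
    qed (use L0 in simp)
    finally show ?thesis by simp
  qed
  have K1: "0 \<le> x * (L - ln x)"
    using x1 by (simp add: L_def)
  have K2: "x * (L - ln x) \<le> 1"
  proof -
    have "1 + 1/x = (1 + x) / x" using x1 by (simp add: field_simps)
    then have "ln (1 + 1/x) = L - ln x" using x1 by (simp add: L_def ln_div)
    then have "L - ln x = ln (1 + 1/x)" by simp
    also have "\<dots> \<le> 1/x" using ln_add_one_self_le_self[of "1/x"] x1 by simp
    finally show ?thesis using x1 by (simp add: field_simps)
  qed
  have L2: "L \<le> 1 + ln x"
  proof -
    have "L \<le> ln (2 * x)" using x1 by (simp add: L_def)
    also have "\<dots> = ln 2 + ln x" using x1 by (simp add: ln_mult)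
    finally show ?thesis using ln_2_less_1 by linarith
  qed
  have F: "integral {0..x} \<phi> - (x * ln x - x) = x * (L - ln x) + L - integral {0..x} d"
    using Deq by (simp add: algebra_simps)
  show ?thesis unfolding \<phi>_def[symmetric] F
    using D0 D1 D2 split K1 K2 L2 L0 lnx by (simp add: abs_le_iff)
qed

theorem mainTheorem8:
  shows "(\<lambda>x::real. integral {0..x} (\<lambda>t. ln (1 + (x - t) * f8 t) * f8 t) - (x * ln x - x))
           \<in> O[at_top](\<lambda>x. ln x)"
proof (rule bigoI[where c = 6])
  show "\<forall>\<^sub>F x in at_top. norm (integral {0..x} (\<lambda>t. ln (1 + (x - t) * f8 t) * f8 t) - (x * ln x - x))
          \<le> 6 * norm (ln x)"
    unfolding eventually_at_top_linorder
  proof (intro exI allI impI)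
    fix x :: real assume x: "x \<ge> exp 1"
    have x1: "x \<ge> 1" using x exp_ge_add_one_self[of 1] by simp
    have "ln x \<ge> 1" using x x1 by (simp add: ln_ge_iff)
    then show "norm (integral {0..x} (\<lambda>t. ln (1 + (x - t) * f8 t) * f8 t) - (x * ln x - x))
          \<le> 6 * norm (ln x)" using main_bound[OF x] by simp
  qed
qed
end
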